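(* There exists a computable partial function $U$ (from pairs of binary strings to binary strings) such that $\mathrm{KS}_U$ is minimal up to an additive constant, i.e. for every computable partial function $V$ of two string arguments there is a constant $c$ with $\mathrm{KS}_U(y\mid x)\le \mathrm{KS}_V(y\mid x)+c$ for all strings $x,y$, and nevertheless $E_U(x,y)=\infty$ for some binary strings $x,y$ (so $E_U$ is not minimal up to an additive constant among the functions $E_V$).
   Context: For a computable partial function $U(p,x)$ of two binary-string arguments with binary-string values, $\mathrm{KS}_U(y\mid x)=\min\{|p|: U(p,x)=y\}$ and $E_U(x,y)=\min\{|p| : U(p,x)=y \text{ and } U(p,y)=x\}$, where $|p|$ is the length of $p$ and $\min\emptyset=\infty$. *)

theory Defs
  imports Main "HOL-Library.Extended_Nat"
begin

datatype rf = Zero | Succ | Proj nat | Comp rf "rf list" | Prim rf rf | Mu rf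

inductive eval :: "rf \<Rightarrow> nat list \<Rightarrow> nat \<Rightarrow> bool" where
  zero: "eval Zero xs 0"
| succ: "eval Succ (x # xs) (Suc x)"
| proj: "i < length xs \<Longrightarrow> eval (Proj i) xs (xs ! i)"
| comp: "list_all2 (\<lambda>g v. eval g xs v) gs vs \<Longrightarrow> eval f vs v \<Longrightarrow> eval (Comp f gs) xs v"
| prim0: "eval f xs v \<Longrightarrow> eval (Prim f g) (0 # xs) v"
| primS: "eval (Prim f g) (n # xs) r \<Longrightarrow> eval g (r # n # xs) v \<Longrightarrow> eval (Prim f g) (Suc n # xs) v"
| mu: "eval f (n # xs) 0 \<Longrightarrow> (\<forall>m<n. \<exists>w. w > 0 \<and> eval f (m # xs) w) \<Longrightarrow> eval (Mu f) xs n"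

type_synonym bstr = "bool list"

fun enc :: "bstr \<Rightarrow> nat" where
  "enc [] = 0"
| "enc (b # xs) = 2 * enc xs + (if b then 2 else 1)"

definition computable2 :: "(bstr \<Rightarrow> bstr \<Rightarrow> bstr option) \<Rightarrow> bool" where
  "computable2 U \<longleftrightarrow> (\<exists>f. \<forall>p x y. U p x = Some y \<longleftrightarrow> eval f [enc p, enc x] (enc y))"

definition KS :: "(bstr \<Rightarrow> bstr \<Rightarrow> bstr option) \<Rightarrow> bstr \<Rightarrow> bstr \<Rightarrow> enat" where
  "KS U y x = (INF p \<in> {p. U p x = Some y}. enat (length p))"

definition E :: "(bstr \<Rightarrow> bstr \<Rightarrow> bstr option) \<Rightarrow> bstr \<Rightarrow> bstr \<Rightarrow> enat" where
  "E U x y = (INF p \<in> {p. U p x = Some y \<and> U p y = Some x}. enat (length p))"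

end

theory Submission
  imports Defs
begin

inductive_cases evalZeroE: "eval Zero xs v"
inductive_cases evalSuccE: "eval Succ xs v"
inductive_cases evalProjE: "eval (Proj i) xs v"
inductive_cases evalCompE: "eval (Comp f gs) (xs::nat list) v"
inductive_cases evalPrimE: "eval (Prim f g) xs v"
inductive_cases evalMuE: "eval (Mu f) xs v"

lemma eval_det: "eval f xs v \<Longrightarrow> eval f xs v' \<Longrightarrow> v' = v"
proof (induction arbitrary: v' rule: eval.induct)
  case (zero xs) from zero.prems show ?case by (cases rule: evalZeroE) simp
next
  case (succ x xs) from succ.prems show ?case by (cases rule: evalSuccE) auto
next
  case (proj i xs) from proj.prems show ?case by (cases rule: evalProjE) simp
next
  case (comp xs gs vs f v)
  from comp.prems obtain vs' where A: "list_all2 (\<lambda>g v. eval g xs v) gs vs'" and B: "eval f vs' v'"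
    by (blast elim: evalCompE)
  have "length vs' = length vs" using list_all2_lengthD[OF A] list_all2_lengthD[OF comp.IH(1)] by simp
  moreover have "\<forall>i<length vs. vs' ! i = vs ! i"
  proof (intro allI impI)
    fix i assume i: "i < length vs"
    have "eval (gs!i) xs (vs!i) \<and> (\<forall>x. eval (gs!i) xs x \<longrightarrow> x = vs!i)"
      using list_all2_nthD2[OF comp.IH(1) i] by blast
    moreover have "eval (gs!i) xs (vs'!i)"
      using list_all2_nthD2[OF A] i \<open>length vs' = length vs\<close> by simp
    ultimately show "vs' ! i = vs ! i" by blast
  qed
  ultimately have "vs' = vs" by (simp add: list_eq_iff_nth_eq)
  then show ?case using comp.IH(2) B by blast
next
  case (prim0 f xs v g) 
  from prim0.prems have "eval f xs v'" by (cases rule: evalPrimE) auto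
  then show ?case using prim0.IH by blast
next
  case (primS f g n xs r v)
  from primS.prems obtain r' where "eval (Prim f g) (n # xs) r'" "eval g (r' # n # xs) v'"
    by (cases rule: evalPrimE) auto
  then show ?case using primS.IH by blast
next
  case (mu f n xs)
  from mu.prems have A: "eval f (v' # xs) 0"
    by (cases rule: evalMuE) auto
  from mu.prems have B: "\<forall>m<v'. \<exists>w>0. eval f (m # xs) w"
    by (cases rule: evalMuE) auto
  show ?case
  proof (rule ccontr)
    assume "v' \<noteq> n"
    then consider "v' < n" | "n < v'" by linarith
    then show False
    proof cases
      case 1
      then obtain w where "0 < w" "eval f (v' # xs) w" "\<forall>x. eval f (v' # xs) x \<longrightarrow> x = w"
        using mu.IH(2) by blast
      with A show False by blast
    next
      case 2 then obtain w where "w>0" "eval f (n#xs) w" using B by blast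
      with mu.IH(1) show False by blast
    qed
  qed
qed

definition arg :: "nat \<Rightarrow> nat list \<Rightarrow> nat" where
  "arg i xs = (if i < length xs then xs ! i else 0)"

lemma arg_tl[simp]: "arg i (tl xs) = arg (Suc i) xs"
  by (cases xs) (auto simp: arg_def)

lemma arg_Cons0[simp]: "arg 0 (x # xs) = x" by (simp add: arg_def)
lemma arg_ConsS[simp]: "arg (Suc i) (x # xs) = arg i xs" by (simp add: arg_def)
lemma arg_Cons_num[simp]: "arg (numeral k) (x # xs) = arg (pred_numeral k) xs"
  by (simp add: numeral_eq_Suc)

definition tot :: "nat \<Rightarrow> (nat list \<Rightarrow> nat) \<Rightarrow> bool" where
  "tot n F \<longleftrightarrow> (\<exists>f. \<forall>xs. length xs = n \<longrightarrow> eval f xs (F xs))"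

lemma tot_cong: "tot n F \<Longrightarrow> (\<And>xs. length xs = n \<Longrightarrow> F xs = G xs) \<Longrightarrow> tot n G"
  unfolding tot_def by metis

lemma tot_zero: "tot n (\<lambda>xs. 0)"
  unfolding tot_def by (auto intro: eval.zero)

lemma tot_proj: "i < n \<Longrightarrow> tot n (\<lambda>xs. arg i xs)"
  unfolding tot_def arg_def by (rule exI[of _ "Proj i"]) (auto intro: eval.proj)

lemma tot_compL:
  assumes "tot (length As) h" "\<forall>A\<in>set As. tot n A"
  shows "tot n (\<lambda>xs. h (map (\<lambda>A. A xs) As))"
proof -
  obtain fh where fh: "\<forall>xs. length xs = length As \<longrightarrow> eval fh xs (h xs)"
    using assms(1) unfolding tot_def by blast
  from assms(2) have "\<forall>A\<in>set As. \<exists>f. \<forall>xs. length xs = n \<longrightarrow> eval f xs (A xs)"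
    by (auto simp: tot_def)
  then have "\<exists>\<phi>. \<forall>A\<in>set As. \<forall>xs. length xs = n \<longrightarrow> eval (\<phi> A) xs (A xs)"
    by (rule bchoice)
  then obtain \<phi> where \<phi>: "\<forall>A\<in>set As. \<forall>xs. length xs = n \<longrightarrow> eval (\<phi> A) xs (A xs)"
    by blast
  show ?thesis unfolding tot_def
    apply (rule exI[of _ "Comp fh (map \<phi> As)"])
    apply (intro allI impI)
    subgoal for xs
      apply (rule eval.comp[where vs="map (\<lambda>A. A xs) As"])
      apply (simp add: list_all2_conv_all_nth \<phi>)
      using fh by simp
    done
qed

lemma tot_op1: assumes "tot 1 (\<lambda>ys. g (arg 0 ys))" "tot n A" shows "tot n (\<lambda>xs. g (A xs))"
proof -
  have "tot n (\<lambda>xs. (\<lambda>ys. g (arg 0 ys)) (map (\<lambda>A. A xs) [A]))"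
    by (rule tot_compL) (use assms in \<open>simp_all add: eval_nat_numeral\<close>)
  then show ?thesis by (simp add: arg_def)
qed

lemma tot_op2: assumes "tot 2 (\<lambda>ys. g (arg 0 ys) (arg 1 ys))" "tot n A" "tot n B"
  shows "tot n (\<lambda>xs. g (A xs) (B xs))"
proof -
  have "tot n (\<lambda>xs. (\<lambda>ys. g (arg 0 ys) (arg 1 ys)) (map (\<lambda>A. A xs) [A,B]))"
    by (rule tot_compL) (use assms in \<open>simp_all add: eval_nat_numeral\<close>)
  then show ?thesis by (simp add: arg_def)
qed

lemma tot_op3: assumes "tot 3 (\<lambda>ys. g (arg 0 ys) (arg 1 ys) (arg 2 ys))" "tot n A" "tot n B" "tot n C"
  shows "tot n (\<lambda>xs. g (A xs) (B xs) (C xs))"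
proof -
  have "tot n (\<lambda>xs. (\<lambda>ys. g (arg 0 ys) (arg 1 ys) (arg 2 ys)) (map (\<lambda>A. A xs) [A,B,C]))"
    by (rule tot_compL) (use assms in \<open>simp_all add: eval_nat_numeral\<close>)
  then show ?thesis by (simp add: arg_def)
qed

lemma tot_op4: assumes "tot 4 (\<lambda>ys. g (arg 0 ys) (arg 1 ys) (arg 2 ys) (arg 3 ys))" "tot n A" "tot n B" "tot n C" "tot n D"
  shows "tot n (\<lambda>xs. g (A xs) (B xs) (C xs) (D xs))"
proof -
  have "tot n (\<lambda>xs. (\<lambda>ys. g (arg 0 ys) (arg 1 ys) (arg 2 ys) (arg 3 ys)) (map (\<lambda>A. A xs) [A,B,C,D]))"
    by (rule tot_compL) (use assms in \<open>simp_all add: eval_nat_numeral\<close>)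
  then show ?thesis by (simp add: arg_def)
qed

lemma tot_op5: assumes "tot 5 (\<lambda>ys. g (arg 0 ys) (arg 1 ys) (arg 2 ys) (arg 3 ys) (arg 4 ys))" "tot n A" "tot n B" "tot n C" "tot n D" "tot n E5"
  shows "tot n (\<lambda>xs. g (A xs) (B xs) (C xs) (D xs) (E5 xs))"
proof -
  have "tot n (\<lambda>xs. (\<lambda>ys. g (arg 0 ys) (arg 1 ys) (arg 2 ys) (arg 3 ys) (arg 4 ys)) (map (\<lambda>A. A xs) [A,B,C,D,E5]))"
    by (rule tot_compL) (use assms in \<open>simp_all add: eval_nat_numeral\<close>)
  then show ?thesis by (simp add: arg_def)
qed

lemma tot_suc: "tot n A \<Longrightarrow> tot n (\<lambda>xs. Suc (A xs))"
proof -
  have "tot 1 (\<lambda>ys. Suc (arg 0 ys))" unfolding tot_def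
    by (rule exI[of _ Succ]) (auto simp: length_Suc_conv intro: eval.succ)
  then show "tot n A \<Longrightarrow> tot n (\<lambda>xs. Suc (A xs))" by (rule tot_op1)
qed

lemma tot_const: "tot n (\<lambda>xs. k)"
  by (induction k) (auto intro: tot_zero tot_suc)

lemma tot_prim:
  assumes "tot n g" "tot (Suc (Suc n)) h"
    and "\<And>xs. length xs = n \<Longrightarrow> F (0#xs) = g xs"
    and "\<And>y xs. length xs = n \<Longrightarrow> F (Suc y # xs) = h (F (y#xs) # y # xs)"
  shows "tot (Suc n) F"
proof -
  obtain fg where fg: "\<forall>xs. length xs = n \<longrightarrow> eval fg xs (g xs)"
    using assms(1) unfolding tot_def by blast
  obtain fh where fh: "\<forall>xs. length xs = Suc (Suc n) \<longrightarrow> eval fh xs (h xs)"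
    using assms(2) unfolding tot_def by blast
  have *: "eval (Prim fg fh) (y#xs) (F (y#xs))" if "length xs = n" for y xs
  proof (induction y)
    case 0 then show ?case using fg that assms(3) by (auto intro: eval.prim0)
  next
    case (Suc y)
    then show ?case using fh that assms(4)[OF that, of y]
      by (auto intro!: eval.primS)
  qed
  show ?thesis unfolding tot_def
    by (rule exI[of _ "Prim fg fh"]) (auto simp: length_Suc_conv intro: *)
qed

lemma tot_mu:
  assumes "tot (Suc n) Q" "\<And>xs. length xs = n \<Longrightarrow> \<exists>m. Q (m#xs) = 0"
  shows "tot n (\<lambda>xs. LEAST m. Q (m#xs) = 0)"
proof -
  obtain fq where fq: "\<forall>xs. length xs = Suc n \<longrightarrow> eval fq xs (Q xs)"
    using assms(1) unfolding tot_def by blast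
  show ?thesis unfolding tot_def
  proof (rule exI[of _ "Mu fq"], intro allI impI)
    fix xs :: "nat list" assume l: "length xs = n"
    let ?L = "LEAST m. Q (m#xs) = 0"
    have "Q (?L # xs) = 0" using assms(2)[OF l] by (rule LeastI_ex)
    moreover have "eval fq (?L # xs) (Q (?L # xs))" using fq[rule_format, of "?L # xs"] l by simp
    ultimately have "eval fq (?L # xs) 0" by simp
    moreover have "\<forall>m<?L. \<exists>w>0. eval fq (m # xs) w"
    proof (intro allI impI)
      fix m assume "m < ?L"
      then have "Q (m # xs) \<noteq> 0" by (rule not_less_Least)
      moreover have "eval fq (m # xs) (Q (m # xs))" using fq[rule_format, of "m # xs"] l by simp
      ultimately show "\<exists>w>0. eval fq (m # xs) w" by blast
    qed
    ultimately show "eval (Mu fq) xs ?L" by (rule eval.mu)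
  qed
qed

lemma arg_Cons1[simp]: "arg 1 (x # xs) = arg 0 xs" by (simp add: arg_def)

lemma tot_tl: assumes "tot n R" shows "tot (Suc n) (\<lambda>zs. R (tl zs))"
proof -
  let ?As = "map (\<lambda>i zs. arg (Suc i) zs) [0..<n]"
  have 1: "tot (Suc n) (\<lambda>xs. R (map (\<lambda>A. A xs) ?As))"
    by (rule tot_compL) (use assms in \<open>auto intro: tot_proj\<close>)
  have 2: "map (\<lambda>A. A xs) ?As = tl xs" if "length xs = Suc n" for xs :: "nat list"
    using that by (auto simp: arg_def nth_tl intro: nth_equalityI)
  show ?thesis by (rule tot_cong[OF 1]) (subst 2; simp)
qed

lemma tot_consarg: assumes "tot (Suc n) R" "tot n B" shows "tot n (\<lambda>xs. R (B xs # xs))"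
proof -
  let ?As = "B # map (\<lambda>i zs. arg i zs) [0..<n]"
  have 1: "tot n (\<lambda>xs. R (map (\<lambda>A. A xs) ?As))"
    by (rule tot_compL) (use assms in \<open>auto intro: tot_proj\<close>)
  have 2: "map (\<lambda>A. A xs) ?As = B xs # xs" if "length xs = n" for xs :: "nat list"
    using that by (auto simp: arg_def intro: nth_equalityI)
  show ?thesis by (rule tot_cong[OF 1]) (subst 2; simp)
qed

lemma tot_add: "tot n A \<Longrightarrow> tot n B \<Longrightarrow> tot n (\<lambda>xs. A xs + B xs)"
proof -
  have "tot (Suc (Suc 0)) (\<lambda>ys. arg 0 ys + arg 1 ys)"
    by (rule tot_prim[where g="\<lambda>xs. arg 0 xs" and h="\<lambda>zs. Suc (arg 0 zs)"])
      (assumption | intro tot_proj tot_suc | simp)+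
  then have "tot 2 (\<lambda>ys. arg 0 ys + arg 1 ys)" by (simp add: numeral_2_eq_2)
  then show "tot n A \<Longrightarrow> tot n B \<Longrightarrow> tot n (\<lambda>xs. A xs + B xs)" by (rule tot_op2)
qed

lemma tot_mult: "tot n A \<Longrightarrow> tot n B \<Longrightarrow> tot n (\<lambda>xs. A xs * B xs)"
proof -
  have "tot (Suc (Suc 0)) (\<lambda>ys. arg 0 ys * arg 1 ys)"
    by (rule tot_prim[where g="\<lambda>xs. 0" and h="\<lambda>zs. arg 0 zs + arg 2 zs"])
      (assumption | intro tot_proj tot_add tot_const | simp)+
  then have "tot 2 (\<lambda>ys. arg 0 ys * arg 1 ys)" by (simp add: numeral_2_eq_2)
  then show "tot n A \<Longrightarrow> tot n B \<Longrightarrow> tot n (\<lambda>xs. A xs * B xs)" by (rule tot_op2)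
qed

lemma tot_pred: "tot n A \<Longrightarrow> tot n (\<lambda>xs. A xs - 1)"
proof -
  have "tot (Suc 0) (\<lambda>ys. arg 0 ys - 1)"
    by (rule tot_prim[where g="\<lambda>xs. 0" and h="\<lambda>zs. arg 1 zs"])
      (assumption | intro tot_proj tot_const | simp)+
  then have T: "tot 1 (\<lambda>ys. arg 0 ys - 1)" by simp
  show "tot n A \<Longrightarrow> tot n (\<lambda>xs. A xs - 1)" by (rule tot_op1[OF T])
qed

lemma tot_sub: "tot n A \<Longrightarrow> tot n B \<Longrightarrow> tot n (\<lambda>xs. A xs - B xs)"
proof -
  have "tot (Suc (Suc 0)) (\<lambda>ys. arg 1 ys - arg 0 ys)"
    by (rule tot_prim[where g="\<lambda>xs. arg 0 xs" and h="\<lambda>zs. arg 0 zs - 1"])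
      (assumption | intro tot_proj tot_pred | simp)+
  then have "tot 2 (\<lambda>ys. (\<lambda>a b. b - a) (arg 0 ys) (arg 1 ys))" by (simp add: numeral_2_eq_2)
  then have "tot 2 (\<lambda>ys. arg 0 ys - arg 1 ys)"
    using tot_op2[of "\<lambda>a b. b - a" 2 "\<lambda>ys. arg 1 ys" "\<lambda>ys. arg 0 ys"] by (simp add: tot_proj)
  then show "tot n A \<Longrightarrow> tot n B \<Longrightarrow> tot n (\<lambda>xs. A xs - B xs)" by (rule tot_op2)
qed

lemma tot_pow2: "tot n A \<Longrightarrow> tot n (\<lambda>xs. 2 ^ A xs)"
proof -
  have "tot (Suc 0) (\<lambda>ys. 2 ^ arg 0 ys)"
    by (rule tot_prim[where g="\<lambda>xs. 1" and h="\<lambda>zs. arg 0 zs + arg 0 zs"])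
      (assumption | intro tot_proj tot_const tot_add | simp)+
  then have T: "tot 1 (\<lambda>ys. 2 ^ arg 0 ys)" by simp
  show "tot n A \<Longrightarrow> tot n (\<lambda>xs. 2 ^ A xs)" by (rule tot_op1[OF T])
qed

definition totP :: "nat \<Rightarrow> (nat list \<Rightarrow> bool) \<Rightarrow> bool" where
  "totP n P \<longleftrightarrow> tot n (\<lambda>xs. if P xs then 1 else 0)"

lemma totP_eq: "tot n A \<Longrightarrow> tot n B \<Longrightarrow> totP n (\<lambda>xs. A xs = B xs)"
  unfolding totP_def
  by (rule tot_cong[where F="\<lambda>xs. 1 - ((A xs - B xs) + (B xs - A xs))"])
     (assumption | intro tot_sub tot_add tot_const | simp)+

lemma totP_less: "tot n A \<Longrightarrow> tot n B \<Longrightarrow> totP n (\<lambda>xs. A xs < B xs)"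
  unfolding totP_def
  by (rule tot_cong[where F="\<lambda>xs. 1 - (1 - (B xs - A xs))"])
     (assumption | intro tot_sub tot_const | simp)+

lemma totP_le: "tot n A \<Longrightarrow> tot n B \<Longrightarrow> totP n (\<lambda>xs. A xs \<le> B xs)"
  unfolding totP_def
  by (rule tot_cong[where F="\<lambda>xs. 1 - (A xs - B xs)"])
     (assumption | intro tot_sub tot_const | simp)+

lemma totP_conj: "totP n P \<Longrightarrow> totP n Q \<Longrightarrow> totP n (\<lambda>xs. P xs \<and> Q xs)"
  unfolding totP_def
  by (rule tot_cong[where F="\<lambda>xs. (if P xs then 1 else 0) * (if Q xs then 1 else 0)"])
     (assumption | intro tot_mult | simp)+

lemma totP_not: "totP n P \<Longrightarrow> totP n (\<lambda>xs. \<not> P xs)"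
  unfolding totP_def
  by (rule tot_cong[where F="\<lambda>xs. 1 - (if P xs then 1 else 0)"])
     (assumption | intro tot_sub tot_const | simp)+

lemma totP_disj: "totP n P \<Longrightarrow> totP n Q \<Longrightarrow> totP n (\<lambda>xs. P xs \<or> Q xs)"
proof -
  assume "totP n P" "totP n Q"
  then have "totP n (\<lambda>xs. \<not> (\<not> P xs \<and> \<not> Q xs))" by (intro totP_not totP_conj)
  then show ?thesis by simp
qed

lemma totP_imp: "totP n P \<Longrightarrow> totP n Q \<Longrightarrow> totP n (\<lambda>xs. P xs \<longrightarrow> Q xs)"
proof -
  assume "totP n P" "totP n Q"
  then have "totP n (\<lambda>xs. \<not> P xs \<or> Q xs)" by (intro totP_not totP_disj)
  then show ?thesis by simp
qed

lemma totP_const: "totP n (\<lambda>xs. b)"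
  unfolding totP_def by (cases b) (assumption | intro tot_const | simp)+

lemma tot_if: "totP n P \<Longrightarrow> tot n A \<Longrightarrow> tot n B \<Longrightarrow> tot n (\<lambda>xs. if P xs then A xs else B xs)"
  unfolding totP_def
  by (rule tot_cong[where F="\<lambda>xs. (if P xs then 1 else 0) * A xs + (1 - (if P xs then 1 else 0)) * B xs"])
     (assumption | intro tot_sub tot_const tot_add tot_mult | simp)+

lemma totP_bex0:
  assumes "totP (Suc n) (\<lambda>ys. Q (arg 0 ys) (tl ys))"
  shows "totP (Suc n) (\<lambda>ys. \<exists>j<arg 0 ys. Q j (tl ys))"
  unfolding totP_def
proof (rule tot_prim[where g="\<lambda>xs. 0" and h="\<lambda>zs. if arg 0 zs = 1 \<or> Q (arg 1 zs) (tl (tl zs)) then 1 else 0"])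
  show "tot n (\<lambda>xs. 0)" by (rule tot_const)
  have "tot (Suc n) (\<lambda>ys. if Q (arg 0 ys) (tl ys) then 1 else 0)" using assms by (simp add: totP_def)
  then have "tot (Suc (Suc n)) (\<lambda>zs. (\<lambda>ys. if Q (arg 0 ys) (tl ys) then 1 else 0) (tl zs))" by (rule tot_tl)
  then have "totP (Suc (Suc n)) (\<lambda>zs. Q (arg 1 zs) (tl (tl zs)))" by (simp add: totP_def)
  then have "totP (Suc (Suc n)) (\<lambda>zs. arg 0 zs = 1 \<or> Q (arg 1 zs) (tl (tl zs)))"
    by (intro totP_disj totP_eq tot_proj tot_const) simp_all
  then show "tot (Suc (Suc n)) (\<lambda>zs. if arg 0 zs = 1 \<or> Q (arg 1 zs) (tl (tl zs)) then 1 else 0)"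
    by (simp add: totP_def)
next
  fix xs :: "nat list" show "(if \<exists>j<arg 0 (0 # xs). Q j (tl (0 # xs)) then 1 else 0) = 0" by simp
next
  fix y and xs :: "nat list"
  show "(if \<exists>j<arg 0 (Suc y # xs). Q j (tl (Suc y # xs)) then 1 else 0) =
        (if arg 0 ((if \<exists>j<arg 0 (y # xs). Q j (tl (y # xs)) then 1 else 0) # y # xs) = 1 \<or>
            Q (arg 1 ((if \<exists>j<arg 0 (y # xs). Q j (tl (y # xs)) then 1 else 0) # y # xs))
              (tl (tl ((if \<exists>j<arg 0 (y # xs). Q j (tl (y # xs)) then 1 else 0) # y # xs)))
         then 1 else 0)"
    by (auto simp: less_Suc_eq)
qed

lemma totP_bex:
  assumes "totP (Suc n) (\<lambda>ys. Q (arg 0 ys) (tl ys))" "tot n B"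
  shows "totP n (\<lambda>xs. \<exists>j<B xs. Q j xs)"
proof -
  have "tot (Suc n) (\<lambda>ys. if \<exists>j<arg 0 ys. Q j (tl ys) then 1 else 0)"
    using totP_bex0[OF assms(1)] by (simp add: totP_def)
  from tot_consarg[OF this assms(2)] show ?thesis by (simp add: totP_def)
qed

lemma totP_ball:
  assumes "totP (Suc n) (\<lambda>ys. Q (arg 0 ys) (tl ys))" "tot n B"
  shows "totP n (\<lambda>xs. \<forall>j<B xs. Q j xs)"
proof -
  have "totP (Suc n) (\<lambda>ys. \<not> Q (arg 0 ys) (tl ys))" using assms(1) by (rule totP_not)
  then have "totP n (\<lambda>xs. \<exists>j<B xs. \<not> Q j xs)" using assms(2) by (rule totP_bex)
  then have "totP n (\<lambda>xs. \<not> (\<exists>j<B xs. \<not> Q j xs))" by (rule totP_not)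
  then show ?thesis by simp
qed

lemma tot_least:
  assumes "totP (Suc n) (\<lambda>ys. P (arg 0 ys) (tl ys))" "\<And>xs. length xs = n \<Longrightarrow> \<exists>m. P m xs"
  shows "tot n (\<lambda>xs. LEAST m. P m xs)"
proof -
  define Q where "Q = (\<lambda>ys. 1 - (if P (arg 0 ys) (tl ys) then 1 else 0::nat))"
  have "tot (Suc n) Q"
    using assms(1) unfolding totP_def Q_def by (intro tot_sub tot_const)
  then have "tot n (\<lambda>xs. LEAST m. Q (m # xs) = 0)"
    by (rule tot_mu) (use assms(2) in \<open>auto simp: Q_def\<close>)
  moreover have "(\<lambda>xs. LEAST m. Q (m # xs) = 0) = (\<lambda>xs. LEAST m. P m xs)"
    by (simp add: Q_def)
  ultimately show ?thesis by simp
qed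

lemma tot_Suc_arg: "tot n (\<lambda>xs. arg (Suc i) xs) \<Longrightarrow> tot n (\<lambda>xs. arg i (tl xs))" by simp

lemmas tot_I = tot_const tot_proj tot_add tot_mult tot_sub tot_pred tot_suc tot_pow2 tot_if
  totP_eq totP_less totP_le totP_conj totP_disj totP_not totP_imp totP_const totP_bex totP_ball tot_least

definition pr :: "nat \<Rightarrow> nat \<Rightarrow> nat" where "pr a b = (a + b) * (a + b) + a"
definition psq :: "nat \<Rightarrow> nat" where "psq n = (LEAST s. n < Suc s * Suc s)"
definition pfst :: "nat \<Rightarrow> nat" where "pfst n = n - psq n * psq n"
definition psnd :: "nat \<Rightarrow> nat" where "psnd n = psq n - pfst n"

lemma psq_pr: "psq (pr a b) = a + b"
  unfolding psq_def pr_def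
proof (rule Least_equality)
  show "(a + b) * (a + b) + a < Suc (a + b) * Suc (a + b)" by simp
next
  fix s assume "(a + b) * (a + b) + a < Suc s * Suc s"
  then have "(a + b) * (a + b) < Suc s * Suc s" by linarith
  then show "a + b \<le> s" 
    by (metis Suc_le_eq mult_le_mono not_less)
qed

lemma pfst_pr[simp]: "pfst (pr a b) = a"
  by (simp add: pfst_def psq_pr) (simp add: pr_def)

lemma psnd_pr[simp]: "psnd (pr a b) = b"
  by (simp add: psnd_def psq_pr)

lemma psq_le: "psq n \<le> n"
  unfolding psq_def by (rule Least_le) simp

lemma pfst_le: "pfst n \<le> n" by (simp add: pfst_def)
lemma psnd_le: "psnd n \<le> n" using psq_le[of n] by (simp add: psnd_def)

lemma tot_psq1: "tot 1 (\<lambda>ys. psq (arg 0 ys))"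
proof -
  have "tot 1 (\<lambda>xs. LEAST s. arg 0 xs < Suc s * Suc s)"
  proof (rule tot_least[where P="\<lambda>s xs. arg 0 xs < Suc s * Suc s"])
    show "totP (Suc 1) (\<lambda>ys. arg 0 (tl ys) < Suc (arg 0 ys) * Suc (arg 0 ys))"
      by (simp, intro tot_I; simp)
  next
    fix xs :: "nat list" show "\<exists>m. arg 0 xs < Suc m * Suc m"
      by (rule exI[of _ "arg 0 xs"]) simp
  qed
  then show ?thesis by (simp add: psq_def)
qed

lemma tot_psq: "tot n A \<Longrightarrow> tot n (\<lambda>xs. psq (A xs))" by (rule tot_op1[OF tot_psq1])

lemma tot_pfst: "tot n A \<Longrightarrow> tot n (\<lambda>xs. pfst (A xs))"
  unfolding pfst_def by (intro tot_sub tot_mult tot_psq)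

lemma tot_psnd: "tot n A \<Longrightarrow> tot n (\<lambda>xs. psnd (A xs))"
  unfolding psnd_def by (intro tot_sub tot_pfst tot_psq)

lemma tot_pr: "tot n A \<Longrightarrow> tot n B \<Longrightarrow> tot n (\<lambda>xs. pr (A xs) (B xs))"
  unfolding pr_def by (intro tot_add tot_mult)

definition lcons :: "nat \<Rightarrow> nat \<Rightarrow> nat" where "lcons x l = Suc (pr x l)"
definition lhd :: "nat \<Rightarrow> nat" where "lhd n = pfst (n - 1)"
definition ltl :: "nat \<Rightarrow> nat" where "ltl n = psnd (n - 1)"

lemma lhd_lcons[simp]: "lhd (lcons x l) = x" by (simp add: lhd_def lcons_def)
lemma ltl_lcons[simp]: "ltl (lcons x l) = l" by (simp add: ltl_def lcons_def)
lemma lcons_pos[simp]: "lcons x l \<noteq> 0" by (simp add: lcons_def)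
lemma ltl_less: "n > 0 \<Longrightarrow> ltl n < n"
  using psnd_le[of "n - 1"] by (simp add: ltl_def)
lemma ltl_0[simp]: "ltl 0 = 0"
  using psnd_le[of 0] by (simp add: ltl_def)

lemma tot_lcons: "tot n A \<Longrightarrow> tot n B \<Longrightarrow> tot n (\<lambda>xs. lcons (A xs) (B xs))"
  unfolding lcons_def by (intro tot_suc tot_pr)
lemma tot_lhd: "tot n A \<Longrightarrow> tot n (\<lambda>xs. lhd (A xs))"
  unfolding lhd_def by (intro tot_pfst tot_pred)
lemma tot_ltl: "tot n A \<Longrightarrow> tot n (\<lambda>xs. ltl (A xs))"
  unfolding ltl_def by (intro tot_psnd tot_pred)

fun lenc :: "nat list \<Rightarrow> nat" where
  "lenc [] = 0"
| "lenc (x # xs) = lcons x (lenc xs)"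

function ldec :: "nat \<Rightarrow> nat list" where
  "ldec n = (if n = 0 then [] else lhd n # ldec (ltl n))"
  by pat_completeness auto
termination by (relation "measure id") (auto simp: ltl_less)

declare ldec.simps[simp del]

lemma ldec_0[simp]: "ldec 0 = []" by (simp add: ldec.simps)
lemma ldec_pos: "n \<noteq> 0 \<Longrightarrow> ldec n = lhd n # ldec (ltl n)" by (simp add: ldec.simps)
lemma ldec_lcons[simp]: "ldec (lcons x l) = x # ldec l" by (simp add: ldec_pos)
lemma ldec_lenc[simp]: "ldec (lenc xs) = xs" by (induction xs) auto

definition litr :: "nat \<Rightarrow> nat \<Rightarrow> nat" where "litr i l = (ltl ^^ i) l"

lemma litr_0[simp]: "litr 0 l = l" by (simp add: litr_def)
lemma litr_Suc: "litr (Suc i) l = litr i (ltl l)" unfolding litr_def funpow_Suc_right by simp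
lemma litr_Suc2: "litr (Suc i) l = ltl (litr i l)" by (simp add: litr_def)

lemma tot_litr2: "tot 2 (\<lambda>ys. litr (arg 0 ys) (arg 1 ys))"
proof -
  have "tot (Suc 1) (\<lambda>ys. litr (arg 0 ys) (arg 1 ys))"
    by (rule tot_prim[where g="\<lambda>xs. arg 0 xs" and h="\<lambda>zs. ltl (arg 0 zs)"])
       (assumption | intro tot_proj tot_ltl | simp add: litr_Suc2)+
  then show ?thesis by (simp add: numeral_2_eq_2)
qed

lemma tot_litr: "tot n A \<Longrightarrow> tot n B \<Longrightarrow> tot n (\<lambda>xs. litr (A xs) (B xs))"
  by (rule tot_op2[OF tot_litr2])

definition lnth :: "nat \<Rightarrow> nat \<Rightarrow> nat" where "lnth l i = lhd (litr i l)"
definition llen :: "nat \<Rightarrow> nat" where "llen l = length (ldec l)"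

lemma tot_lnth: "tot n A \<Longrightarrow> tot n B \<Longrightarrow> tot n (\<lambda>xs. lnth (A xs) (B xs))"
  unfolding lnth_def by (intro tot_lhd tot_litr)

lemma lnth_ldec: "i < length (ldec l) \<Longrightarrow> lnth l i = ldec l ! i"
proof (induction i arbitrary: l)
  case 0 then show ?case by (cases "l = 0") (auto simp: lnth_def ldec_pos)
next
  case (Suc i)
  then have "l \<noteq> 0" by (cases "l = 0") auto
  then show ?case using Suc by (auto simp: lnth_def ldec_pos litr_Suc)
qed

lemma litr_zero_iff: "litr i l = 0 \<longleftrightarrow> length (ldec l) \<le> i"
proof (induction i arbitrary: l)
  case 0 then show ?case by (cases "l = 0") (auto simp: ldec_pos)
next
  case (Suc i)
  show ?case
  proof (cases "l = 0")
    case True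
    have "litr j 0 = 0" for j by (induction j) (auto simp: litr_Suc)
    then show ?thesis using True by simp
  next
    case False
    then show ?thesis using Suc by (simp add: ldec_pos litr_Suc)
  qed
qed

lemma llen_least: "llen l = (LEAST i. litr i l = 0)"
  unfolding llen_def litr_zero_iff by (rule Least_equality[symmetric]) auto

lemma tot_llen: "tot n A \<Longrightarrow> tot n (\<lambda>xs. llen (A xs))"
proof -
  have "tot 1 (\<lambda>xs. LEAST i. litr i (arg 0 xs) = 0)"
  proof (rule tot_least[where P="\<lambda>i xs. litr i (arg 0 xs) = 0"])
    show "totP (Suc 1) (\<lambda>ys. litr (arg 0 ys) (arg 0 (tl ys)) = 0)"
      by (simp, intro tot_I tot_litr; simp)
  next
    fix xs :: "nat list" show "\<exists>m. litr m (arg 0 xs) = 0"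
      by (auto simp: litr_zero_iff)
  qed
  then have "tot 1 (\<lambda>xs. llen (arg 0 xs))" by (simp add: llen_least)
  then show "tot n A \<Longrightarrow> tot n (\<lambda>xs. llen (A xs))" by (rule tot_op1)
qed

lemmas tot_I2 = tot_I tot_psq tot_pfst tot_psnd tot_pr tot_lcons tot_lhd tot_ltl tot_litr tot_lnth tot_llen

fun code :: "rf \<Rightarrow> nat" where
  "code Zero = pr 0 0"
| "code Succ = pr 1 0"
| "code (Proj i) = pr 2 i"
| "code (Comp f gs) = pr 3 (pr (code f) (lenc (map code gs)))"
| "code (Prim f g) = pr 4 (pr (code f) (code g))"
| "code (Mu f) = pr 5 (code f)"

definition nc :: "nat \<Rightarrow> nat" where "nc nd = pfst nd"
definition na :: "nat \<Rightarrow> nat" where "na nd = pfst (psnd nd)"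
definition nv :: "nat \<Rightarrow> nat" where "nv nd = pfst (psnd (psnd nd))"
definition nw :: "nat \<Rightarrow> nat" where "nw nd = psnd (psnd (psnd nd))"
definition mknode :: "nat \<Rightarrow> nat \<Rightarrow> nat \<Rightarrow> nat \<Rightarrow> nat" where "mknode c a v w = pr c (pr a (pr v w))"

lemma node_simps[simp]: "nc (mknode c a v w) = c" "na (mknode c a v w) = a"
  "nv (mknode c a v w) = v" "nw (mknode c a v w) = w"
  by (simp_all add: nc_def na_def nv_def nw_def mknode_def)

definition okG :: "(nat \<Rightarrow> nat \<Rightarrow> nat \<Rightarrow> bool) \<Rightarrow> (nat \<Rightarrow> nat \<Rightarrow> bool) \<Rightarrow> nat \<Rightarrow> nat \<Rightarrow> nat \<Rightarrow> nat \<Rightarrow> bool" where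
"okG H HP c a v w \<longleftrightarrow>
  (pfst c = 0 \<and> v = 0) \<or>
  (pfst c = 1 \<and> a \<noteq> 0 \<and> v = Suc (lhd a)) \<or>
  (pfst c = 2 \<and> psnd c < llen a \<and> v = lnth a (psnd c)) \<or>
  (pfst c = 3 \<and> llen w = llen (psnd (psnd c)) \<and> (\<forall>j<llen w. H (lnth (psnd (psnd c)) j) a (lnth w j))
     \<and> H (pfst (psnd c)) w v) \<or>
  (pfst c = 4 \<and> a \<noteq> 0 \<and> lhd a = 0 \<and> H (pfst (psnd c)) (ltl a) v) \<or>
  (pfst c = 4 \<and> a \<noteq> 0 \<and> lhd a \<noteq> 0 \<and> H c (lcons (lhd a - 1) (ltl a)) w
     \<and> H (psnd (psnd c)) (lcons w (lcons (lhd a - 1) (ltl a))) v) \<or>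
  (pfst c = 5 \<and> H (psnd c) (lcons v a) 0 \<and> (\<forall>m<v. HP (psnd c) (lcons m a)))"

definition hasL :: "nat list \<Rightarrow> nat \<Rightarrow> nat \<Rightarrow> nat \<Rightarrow> bool" where
  "hasL S c a v \<longleftrightarrow> (\<exists>nd\<in>set S. nc nd = c \<and> na nd = a \<and> nv nd = v)"
definition hasPL :: "nat list \<Rightarrow> nat \<Rightarrow> nat \<Rightarrow> bool" where
  "hasPL S c a \<longleftrightarrow> (\<exists>nd\<in>set S. nc nd = c \<and> na nd = a \<and> nv nd > 0)"

definition okL :: "nat list \<Rightarrow> nat \<Rightarrow> bool" where
  "okL S nd \<longleftrightarrow> okG (hasL S) (hasPL S) (nc nd) (na nd) (nv nd) (nw nd)"

definition validL :: "nat list \<Rightarrow> bool" where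
  "validL Ns \<longleftrightarrow> (\<forall>i<length Ns. okL (take i Ns) (Ns ! i))"

lemma okG_mono:
  assumes "okG H HP c a v w" "\<And>c a v. H c a v \<Longrightarrow> H' c a v" "\<And>c a. HP c a \<Longrightarrow> HP' c a"
  shows "okG H' HP' c a v w"
  using assms unfolding okG_def by blast

lemma okL_mono: "okL S nd \<Longrightarrow> set S \<subseteq> set S' \<Longrightarrow> okL S' nd"
  unfolding okL_def by (erule okG_mono) (auto simp: hasL_def hasPL_def)

lemma validL_append: assumes "validL A" "validL B" shows "validL (A @ B)"
  unfolding validL_def
proof (intro allI impI)
  fix i assume i: "i < length (A @ B)"
  show "okL (take i (A @ B)) ((A @ B) ! i)"
  proof (cases "i < length A")
    case True
    then show ?thesis using assms(1) unfolding validL_def by (simp add: nth_append)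
  next
    case False
    then obtain j where j: "i = length A + j" "j < length B" using i
      by (metis add_diff_inverse_nat length_append nat_add_left_cancel_less)
    have "okL (take j B) (B ! j)" using assms(2) j(2) unfolding validL_def by blast
    moreover have "set (take j B) \<subseteq> set (take i (A @ B))" using j by auto
    ultimately show ?thesis using j by (auto simp: nth_append intro: okL_mono)
  qed
qed

lemma validL_snoc: assumes "validL A" "okL A nd" shows "validL (A @ [nd])"
  unfolding validL_def
proof (intro allI impI)
  fix i assume i: "i < length (A @ [nd])"
  show "okL (take i (A @ [nd])) ((A @ [nd]) ! i)"
  proof (cases "i < length A")
    case True
    then show ?thesis using assms(1) unfolding validL_def by (simp add: nth_append)
  next
    case False
    then have "i = length A" using i by simp
    then show ?thesis using assms(2) by simp
  qed
qed

lemma validL_Nil: "validL []" by (simp add: validL_def)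

lemma hasL_mono: "hasL S c a v \<Longrightarrow> set S \<subseteq> set S' \<Longrightarrow> hasL S' c a v"
  unfolding hasL_def by blast
lemma hasPL_mono: "hasPL S c a \<Longrightarrow> set S \<subseteq> set S' \<Longrightarrow> hasPL S' c a"
  unfolding hasPL_def by blast

lemma llen_lenc[simp]: "llen (lenc xs) = length xs" by (simp add: llen_def)
lemma lnth_lenc[simp]: "i < length xs \<Longrightarrow> lnth (lenc xs) i = xs ! i"
  using lnth_ldec[of i "lenc xs"] by simp

lemma code_simps2[simp]:
  "pfst (code Zero) = 0" "pfst (code Succ) = 1" "pfst (code (Proj i)) = 2" "psnd (code (Proj i)) = i"
  "pfst (code (Comp f gs)) = 3" "pfst (psnd (code (Comp f gs))) = code f"
  "psnd (psnd (code (Comp f gs))) = lenc (map code gs)"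
  "pfst (code (Prim f g)) = 4" "pfst (psnd (code (Prim f g))) = code f" "psnd (psnd (code (Prim f g))) = code g"
  "pfst (code (Mu f)) = 5" "psnd (code (Mu f)) = code f"
  by simp_all

section \<open>Soundness\<close>

lemma hasL_take: "hasL (take i Ns) c a v \<Longrightarrow> \<exists>j<i. j < length Ns \<and> nc (Ns!j) = c \<and> na (Ns!j) = a \<and> nv (Ns!j) = v"
  unfolding hasL_def by (auto simp: in_set_conv_nth; blast)
lemma hasPL_take: "hasPL (take i Ns) c a \<Longrightarrow> \<exists>j<i. j < length Ns \<and> nc (Ns!j) = c \<and> na (Ns!j) = a \<and> nv (Ns!j) > 0"
  unfolding hasPL_def by (auto simp: in_set_conv_nth; blast)

lemma sound_aux:
  assumes V: "validL Ns"
  shows "i < length Ns \<Longrightarrow> nc (Ns!i) = code f \<Longrightarrow> eval f (ldec (na (Ns!i))) (nv (Ns!i))"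
proof (induction i arbitrary: f rule: less_induct)
  case (less i)
  let ?S = "take i Ns"
  have H: "eval g (ldec a) v" if h: "hasL ?S (code g) a v" for g a v
  proof -
    obtain j where "j < i" "j < length Ns" "nc (Ns!j) = code g" "na (Ns!j) = a" "nv (Ns!j) = v"
      using hasL_take[OF h] by blast
    then show ?thesis using less.IH[of j g] by simp
  qed
  have HP: "\<exists>w>0. eval g (ldec a) w" if h: "hasPL ?S (code g) a" for g a
  proof -
    obtain j where "j < i" "j < length Ns" "nc (Ns!j) = code g" "na (Ns!j) = a" "nv (Ns!j) > 0"
      using hasPL_take[OF h] by blast
    then show ?thesis using less.IH[of j g] by auto
  qed
  define a where "a = na (Ns!i)"
  define v where "v = nv (Ns!i)"
  define w where "w = nw (Ns!i)"
  have ok: "okG (hasL ?S) (hasPL ?S) (code f) a v w"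
    using V less.prems unfolding validL_def okL_def a_def v_def w_def by metis
  have "eval f (ldec a) v"
  proof (cases f)
    case Zero
    then show ?thesis using ok by (simp add: okG_def eval.zero)
  next
    case Succ
    then have "a \<noteq> 0" "v = Suc (lhd a)" using ok by (simp_all add: okG_def)
    then show ?thesis using Succ by (simp add: ldec_pos eval.succ)
  next
    case (Proj k)
    then have "k < llen a" "v = lnth a k" using ok by (simp_all add: okG_def)
    then show ?thesis using Proj by (simp add: llen_def lnth_ldec eval.proj)
  next
    case (Comp g gs)
    then have 1: "llen w = length gs" and 2: "\<forall>j<llen w. hasL ?S (code (gs ! j)) a (lnth w j)"
      and 3: "hasL ?S (code g) w v" using ok by (auto simp: okG_def)
    have "list_all2 (\<lambda>g v. eval g (ldec a) v) gs (ldec w)"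
      unfolding list_all2_conv_all_nth
    proof (intro conjI allI impI)
      show "length gs = length (ldec w)" using 1 by (simp add: llen_def)
    next
      fix j assume "j < length gs"
      then have j: "j < llen w" using 1 by simp
      then have "eval (gs ! j) (ldec a) (lnth w j)" using 2 H by blast
      then show "eval (gs ! j) (ldec a) (ldec w ! j)" using j by (simp add: llen_def lnth_ldec)
    qed
    moreover have "eval g (ldec w) v" using H 3 by blast
    ultimately show ?thesis using Comp by (simp add: eval.comp)
  next
    case (Prim g h)
    then have ok': "(a \<noteq> 0 \<and> lhd a = 0 \<and> hasL ?S (code g) (ltl a) v) \<or>
      (a \<noteq> 0 \<and> lhd a \<noteq> 0 \<and> hasL ?S (code f) (lcons (lhd a - 1) (ltl a)) w
       \<and> hasL ?S (code h) (lcons w (lcons (lhd a - 1) (ltl a))) v)"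
      using ok by (simp add: okG_def)
    then show ?thesis
    proof
      assume A: "a \<noteq> 0 \<and> lhd a = 0 \<and> hasL ?S (code g) (ltl a) v"
      then have "eval g (ldec (ltl a)) v" using H by blast
      then have "eval (Prim g h) (0 # ldec (ltl a)) v" by (rule eval.prim0)
      then show ?thesis using A Prim by (simp add: ldec_pos)
    next
      assume A: "a \<noteq> 0 \<and> lhd a \<noteq> 0 \<and> hasL ?S (code f) (lcons (lhd a - 1) (ltl a)) w
       \<and> hasL ?S (code h) (lcons w (lcons (lhd a - 1) (ltl a))) v"
      then have "eval f (ldec (lcons (lhd a - 1) (ltl a))) w" using H[of f] by blast
      then have "eval f ((lhd a - 1) # ldec (ltl a)) w" by simp
      moreover have "eval h (ldec (lcons w (lcons (lhd a - 1) (ltl a)))) v" using H[of h] A by blast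
      then have "eval h (w # (lhd a - 1) # ldec (ltl a)) v" by simp
      ultimately have "eval (Prim g h) (Suc (lhd a - 1) # ldec (ltl a)) v"
        using Prim by (simp add: eval.primS)
      then show ?thesis using A Prim by (simp add: ldec_pos)
    qed
  next
    case (Mu g)
    then have 1: "hasL ?S (code g) (lcons v a) 0" and 2: "\<forall>m<v. hasPL ?S (code g) (lcons m a)"
      using ok by (simp_all add: okG_def)
    have "eval g (v # ldec a) 0" using H[OF 1] by simp
    moreover have "\<forall>m<v. \<exists>u>0. eval g (m # ldec a) u" using HP 2 by fastforce
    ultimately show ?thesis using Mu by (simp add: eval.mu)
  qed
  then show ?case by (simp add: a_def v_def)
qed

lemma sound: assumes V: "validL Ns" and h: "hasL Ns (code f) a v" shows "eval f (ldec a) v"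
proof -
  from h obtain i where "i < length Ns" "nc (Ns!i) = code f" "na (Ns!i) = a" "nv (Ns!i) = v"
    by (auto simp: hasL_def in_set_conv_nth)
  then show ?thesis using sound_aux[OF V, of i f] by simp
qed

lemma add_node: "validL Ns \<Longrightarrow> okG (hasL Ns) (hasPL Ns) c a v w \<Longrightarrow> \<exists>Ns. validL Ns \<and> hasL Ns c a v"
  apply (rule exI[of _ "Ns @ [mknode c a v w]"])
  apply (intro conjI validL_snoc)
    apply (auto simp: okL_def hasL_def)
  done

lemma hasL_app1: "hasL A c a v \<Longrightarrow> hasL (A @ B) c a v" by (auto simp: hasL_def)
lemma hasL_app2: "hasL B c a v \<Longrightarrow> hasL (A @ B) c a v" by (auto simp: hasL_def)
lemma hasPL_app1: "hasPL A c a \<Longrightarrow> hasPL (A @ B) c a" by (auto simp: hasPL_def)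
lemma hasPL_app2: "hasPL B c a \<Longrightarrow> hasPL (A @ B) c a" by (auto simp: hasPL_def)

lemma collect_gs:
  "list_all2 (\<lambda>g v. \<exists>Ns. validL Ns \<and> hasL Ns (code g) a v) gs vs \<Longrightarrow>
   \<exists>Ns. validL Ns \<and> (\<forall>j<length gs. hasL Ns (code (gs!j)) a (vs!j))"
proof (induction rule: list_all2_induct)
  case Nil then show ?case using validL_Nil by auto
next
  case (Cons g gs v vs)
  obtain N1 where N1: "validL N1" "hasL N1 (code g) a v" using Cons.hyps(1) by blast
  obtain N2 where N2: "validL N2" "\<forall>j<length gs. hasL N2 (code (gs!j)) a (vs!j)" using Cons.IH by blast
  show ?case
  proof (rule exI[of _ "N1 @ N2"], intro conjI allI impI)
    show "validL (N1 @ N2)" using N1 N2 by (simp add: validL_append)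
  next
    fix j assume "j < length (g # gs)"
    then show "hasL (N1 @ N2) (code ((g # gs) ! j)) a ((v # vs) ! j)"
      using N1 N2 by (cases j) (auto intro: hasL_app1 hasL_app2)
  qed
qed

lemma collect_mu:
  "(\<forall>m<n. \<exists>Ns. validL Ns \<and> hasPL Ns c (lcons m a)) \<Longrightarrow> \<exists>Ns. validL Ns \<and> (\<forall>m<n. hasPL Ns c (lcons m a))"
proof (induction n)
  case 0 then show ?case using validL_Nil by auto
next
  case (Suc n)
  obtain N1 where N1: "validL N1" "\<forall>m<n. hasPL N1 c (lcons m a)" using Suc by auto
  obtain N2 where N2: "validL N2" "hasPL N2 c (lcons n a)" using Suc.prems by auto
  show ?case
  proof (rule exI[of _ "N1 @ N2"], intro conjI allI impI)
    show "validL (N1 @ N2)" using N1 N2 by (simp add: validL_append)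
  next
    fix m assume "m < Suc n"
    then show "hasPL (N1 @ N2) c (lcons m a)"
      using N1 N2 by (cases "m = n") (auto intro: hasPL_app1 hasPL_app2)
  qed
qed

lemma complete: "eval f xs v \<Longrightarrow> \<exists>Ns. validL Ns \<and> hasL Ns (code f) (lenc xs) v"
proof (induction rule: eval.induct)
  case (zero xs)
  show ?case by (rule add_node[OF validL_Nil, where w=0]) (simp add: okG_def)
next
  case (succ x xs)
  show ?case by (rule add_node[OF validL_Nil, where w=0]) (simp add: okG_def)
next
  case (proj i xs)
  show ?case by (rule add_node[OF validL_Nil, where w=0]) (use proj in \<open>simp add: okG_def\<close>)
next
  case (comp xs gs vs f v)
  have "list_all2 (\<lambda>g v. \<exists>Ns. validL Ns \<and> hasL Ns (code g) (lenc xs) v) gs vs"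
    using comp.IH(1) by (rule list_all2_mono) blast
  from collect_gs[OF this] obtain N1 where N1: "validL N1"
    "\<forall>j<length gs. hasL N1 (code (gs!j)) (lenc xs) (vs!j)" by blast
  obtain N2 where N2: "validL N2" "hasL N2 (code f) (lenc vs) v" using comp.IH(2) by blast
  have len: "length gs = length vs" using list_all2_lengthD[OF comp.IH(1)] .
  show ?case
  proof (rule add_node[where Ns="N1 @ N2" and w="lenc vs"])
    show "validL (N1 @ N2)" using N1 N2 by (simp add: validL_append)
    show "okG (hasL (N1 @ N2)) (hasPL (N1 @ N2)) (code (Comp f gs)) (lenc xs) v (lenc vs)"
      unfolding okG_def using N1 N2 len by (auto intro: hasL_app1 hasL_app2)
  qed
next
  case (prim0 f xs v g)
  then obtain N where N: "validL N" "hasL N (code f) (lenc xs) v" by blast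
  show ?case
    by (rule add_node[OF N(1), where w=0]) (use N in \<open>simp add: okG_def\<close>)
next
  case (primS f g n xs r v)
  obtain N1 where N1: "validL N1" "hasL N1 (code (Prim f g)) (lenc (n # xs)) r" using primS.IH(1) by blast
  obtain N2 where N2: "validL N2" "hasL N2 (code g) (lenc (r # n # xs)) v" using primS.IH(2) by blast
  show ?case
  proof (rule add_node[where Ns="N1 @ N2" and w=r])
    show "validL (N1 @ N2)" using N1 N2 by (simp add: validL_append)
    show "okG (hasL (N1 @ N2)) (hasPL (N1 @ N2)) (code (Prim f g)) (lenc (Suc n # xs)) v r"
      unfolding okG_def using N1 N2 by (auto intro: hasL_app1 hasL_app2)
  qed
next
  case (mu f n xs)
  obtain N1 where N1: "validL N1" "hasL N1 (code f) (lenc (n # xs)) 0" using mu.IH(1) by blast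
  have "\<forall>m<n. \<exists>Ns. validL Ns \<and> hasPL Ns (code f) (lcons m (lenc xs))"
  proof (intro allI impI)
    fix m assume "m < n"
    then obtain w Ns where "w > 0" "validL Ns" "hasL Ns (code f) (lenc (m # xs)) w"
      using mu.IH(2) by blast
    then show "\<exists>Ns. validL Ns \<and> hasPL Ns (code f) (lcons m (lenc xs))"
      by (auto simp: hasL_def hasPL_def)
  qed
  from collect_mu[OF this] obtain N2 where N2: "validL N2" "\<forall>m<n. hasPL N2 (code f) (lcons m (lenc xs))"
    by blast
  show ?case
  proof (rule add_node[where Ns="N1 @ N2" and w=0])
    show "validL (N1 @ N2)" using N1 N2 by (simp add: validL_append)
    show "okG (hasL (N1 @ N2)) (hasPL (N1 @ N2)) (code (Mu f)) (lenc xs) n 0"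
      unfolding okG_def using N1 N2 by (auto intro: hasL_app1 hasPL_app2)
  qed
qed

definition hasC :: "nat \<Rightarrow> nat \<Rightarrow> nat \<Rightarrow> nat \<Rightarrow> nat \<Rightarrow> bool" where
  "hasC L i c a v \<longleftrightarrow> (\<exists>j<i. nc (lnth L j) = c \<and> na (lnth L j) = a \<and> nv (lnth L j) = v)"
definition hasPC :: "nat \<Rightarrow> nat \<Rightarrow> nat \<Rightarrow> nat \<Rightarrow> bool" where
  "hasPC L i c a \<longleftrightarrow> (\<exists>j<i. nc (lnth L j) = c \<and> na (lnth L j) = a \<and> 0 < nv (lnth L j))"
definition okC :: "nat \<Rightarrow> nat \<Rightarrow> bool" where
  "okC L i \<longleftrightarrow> okG (hasC L i) (hasPC L i) (nc (lnth L i)) (na (lnth L i)) (nv (lnth L i)) (nw (lnth L i))"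
definition validC :: "nat \<Rightarrow> bool" where
  "validC L \<longleftrightarrow> (\<forall>i<llen L. okC L i)"

lemma ex_take: assumes "i \<le> length xs" shows "(\<exists>nd\<in>set (take i xs). P nd) \<longleftrightarrow> (\<exists>j<i. P (xs ! j))"
proof
  assume "\<exists>nd\<in>set (take i xs). P nd"
  then obtain j where "j < length (take i xs)" "P (take i xs ! j)" by (auto simp: in_set_conv_nth)
  then show "\<exists>j<i. P (xs ! j)" using assms by auto
next
  assume "\<exists>j<i. P (xs ! j)"
  then obtain j where j: "j < i" "P (xs ! j)" by blast
  then have "take i xs ! j \<in> set (take i xs)" using assms by (intro nth_mem) simp
  then show "\<exists>nd\<in>set (take i xs). P nd" using j assms by auto
qed

lemma hasC_eq: assumes "i \<le> llen L" shows "hasC L i = hasL (take i (ldec L))"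
proof (intro ext)
  fix c a v
  have "hasL (take i (ldec L)) c a v \<longleftrightarrow> (\<exists>j<i. nc (ldec L ! j) = c \<and> na (ldec L ! j) = a \<and> nv (ldec L ! j) = v)"
    unfolding hasL_def by (rule ex_take) (use assms in \<open>simp add: llen_def\<close>)
  also have "\<dots> \<longleftrightarrow> hasC L i c a v"
    unfolding hasC_def using assms by (auto simp: llen_def lnth_ldec)
  finally show "hasC L i c a v = hasL (take i (ldec L)) c a v" by simp
qed

lemma hasPC_eq: assumes "i \<le> llen L" shows "hasPC L i = hasPL (take i (ldec L))"
proof (intro ext)
  fix c a
  have "hasPL (take i (ldec L)) c a \<longleftrightarrow> (\<exists>j<i. nc (ldec L ! j) = c \<and> na (ldec L ! j) = a \<and> 0 < nv (ldec L ! j))"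
    unfolding hasPL_def by (rule ex_take) (use assms in \<open>simp add: llen_def\<close>)
  also have "\<dots> \<longleftrightarrow> hasPC L i c a"
    unfolding hasPC_def using assms by (auto simp: llen_def lnth_ldec)
  finally show "hasPC L i c a = hasPL (take i (ldec L)) c a" by simp
qed

lemma validC_iff: "validC L \<longleftrightarrow> validL (ldec L)"
proof -
  have "okC L i \<longleftrightarrow> okL (take i (ldec L)) (ldec L ! i)" if "i < llen L" for i
    using that hasC_eq[of i L] hasPC_eq[of i L]
    by (simp add: okC_def okL_def lnth_ldec llen_def)
  then show ?thesis unfolding validC_def validL_def llen_def by simp
qed

lemma hasC_iff: "hasC L (llen L) c a v \<longleftrightarrow> hasL (ldec L) c a v"
  using hasC_eq[of "llen L" L] by (simp add: llen_def)

lemma tot_arg_tl: "tot n (\<lambda>xs. arg (Suc i) (T xs)) \<Longrightarrow> tot n (\<lambda>xs. arg i (tl (T xs)))" by simp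

lemma tot_okC: "totP 2 (\<lambda>xs. okC (arg 0 xs) (arg 1 xs))"
  unfolding okC_def okG_def hasC_def hasPC_def nc_def na_def nv_def nw_def
  by (intro tot_I2 tot_arg_tl) simp_all

section \<open>Binary strings\<close>

function dec :: "nat \<Rightarrow> bstr" where
  "dec n = (if n = 0 then [] else if odd n then False # dec ((n - 1) div 2) else True # dec ((n - 2) div 2))"
  by pat_completeness auto
termination by (relation "measure id") auto

declare dec.simps[simp del]

lemma enc_dec[simp]: "enc (dec n) = n"
proof (induction n rule: less_induct)
  case (less n)
  show ?case
  proof (cases "n = 0")
    case True then show ?thesis by (simp add: dec.simps)
  next
    case False
    show ?thesis
    proof (cases "odd n")
      case True
      then have "enc (dec ((n - 1) div 2)) = (n - 1) div 2" using False by (intro less.IH) auto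
      then show ?thesis using False True by (subst dec.simps) (auto elim!: oddE)
    next
      case odd: False
      then have "enc (dec ((n - 2) div 2)) = (n - 2) div 2" using False by (intro less.IH) auto
      then show ?thesis using False odd by (subst dec.simps) (auto elim!: evenE)
    qed
  qed
qed

lemma dec_enc[simp]: "dec (enc y) = y"
proof (induction y)
  case Nil then show ?case by (simp add: dec.simps)
next
  case (Cons b y) then show ?case by (subst dec.simps) auto
qed

lemma enc_inj: "enc x = enc y \<Longrightarrow> x = y" by (metis dec_enc)

lemma enc_append: "enc (a @ q) = enc a + 2 ^ length a * enc q"
  by (induction a) auto

lemma enc_rep: "enc (replicate k True) = 2 ^ Suc k - 2"
proof (induction k)
  case 0 then show ?case by simp
next
  case (Suc k)
  have "(1::nat) \<le> 2 ^ k" by simp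
  then show ?case using Suc by (simp, arith)
qed

lemma rep_inj: "replicate k True @ False # u = replicate k' True @ False # u' \<Longrightarrow> k = k' \<and> u = u'"
proof (induction k arbitrary: k')
  case 0 then show ?case by (cases k') auto
next
  case (Suc k) then show ?case by (cases k') auto
qed

definition Pval :: "nat \<Rightarrow> nat \<Rightarrow> nat \<Rightarrow> nat" where
  "Pval bb k qn = 2 * ((2 ^ (k + 1) - 2) + 2 ^ k * (2 * qn + 1)) + (if bb = 0 then 1 else 2)"

lemma Pval_enc: "Pval bb k qn = enc ((bb \<noteq> 0) # replicate k True @ False # dec qn)"
  by (simp add: Pval_def enc_append enc_rep)

section \<open>The universal function\<close>

definition tk :: "nat \<Rightarrow> nat" where "tk t = pfst t"
definition tq :: "nat \<Rightarrow> nat" where "tq t = pfst (psnd t)"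
definition tL :: "nat \<Rightarrow> nat" where "tL t = pfst (psnd (psnd t))"
definition tb :: "nat \<Rightarrow> nat" where "tb t = pfst (psnd (psnd (psnd t)))"
definition tv :: "nat \<Rightarrow> nat" where "tv t = psnd (psnd (psnd (psnd t)))"

definition RR :: "nat \<Rightarrow> nat \<Rightarrow> nat \<Rightarrow> bool" where
  "RR P X t \<longleftrightarrow> validC (tL t) \<and> hasC (tL t) (llen (tL t)) (tk t) (lcons (tq t) (lcons X 0)) (tv t)
     \<and> P = Pval (tb t) (tk t) (tq t) \<and> (tb t = 0 \<longrightarrow> X \<noteq> 0) \<and> (tb t \<noteq> 0 \<longrightarrow> X \<noteq> 2)"

definition UU :: "bstr \<Rightarrow> bstr \<Rightarrow> bstr option" where
  "UU p x = (if \<exists>t. RR (enc p) (enc x) t then Some (dec (tv (LEAST t. RR (enc p) (enc x) t))) else None)"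

lemma totP_okC: "tot n A \<Longrightarrow> tot n B \<Longrightarrow> totP n (\<lambda>xs. okC (A xs) (B xs))"
  using tot_op2[OF tot_okC[unfolded totP_def]] unfolding totP_def by blast

lemma tot_RR: "totP 3 (\<lambda>ys. RR (arg 1 ys) (arg 2 ys) (arg 0 ys))"
  unfolding RR_def validC_def hasC_def tk_def tq_def tL_def tb_def tv_def Pval_def nc_def na_def nv_def
  by (intro tot_I2 tot_arg_tl totP_okC) simp_all

lemma tot_tv: "tot 1 (\<lambda>ys. tv (arg 0 ys))"
  unfolding tv_def by (intro tot_I2) simp_all

lemma computable_UU: "computable2 UU"
proof -
  have "tot 3 (\<lambda>ys. 1 - (if RR (arg 1 ys) (arg 2 ys) (arg 0 ys) then 1 else 0))"
    using tot_RR unfolding totP_def by (intro tot_sub tot_const)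
  then obtain fR where fR: "\<And>ys. length ys = 3 \<Longrightarrow> eval fR ys (1 - (if RR (arg 1 ys) (arg 2 ys) (arg 0 ys) then 1 else 0))"
    unfolding tot_def by blast
  obtain fO where fO: "\<And>ys. length ys = 1 \<Longrightarrow> eval fO ys (tv (arg 0 ys))"
    using tot_tv unfolding tot_def by blast
  have fR': "eval fR [t, P, X] (1 - (if RR P X t then 1 else 0))" for t P X
    using fR[of "[t, P, X]"] by (simp add: numeral_eq_Suc)
  have fO': "eval fO [t] (tv t)" for t using fO[of "[t]"] by simp
  define F where "F = Comp fO [Mu fR]"
  have key: "eval F [P, X] y \<longleftrightarrow> (\<exists>t. RR P X t) \<and> y = tv (LEAST t. RR P X t)" for P X y
  proof
    assume "eval F [P, X] y"
    then obtain vs where A: "list_all2 (\<lambda>g v. eval g [P, X] v) [Mu fR] vs" and B: "eval fO vs y"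
      unfolding F_def by (blast elim: evalCompE)
    from A obtain t where vs: "vs = [t]" and M: "eval (Mu fR) [P, X] t"
      by (cases vs) auto
    from M have M1: "eval fR (t # [P, X]) 0" by (cases rule: evalMuE) auto
    from M have M2: "\<forall>m<t. \<exists>w>0. eval fR (m # [P, X]) w" by (cases rule: evalMuE) auto
    have "(1::nat) - (if RR P X t then 1 else 0) = 0" using eval_det[OF fR' M1] by simp
    then have R: "RR P X t" by (cases "RR P X t") auto
    have "\<not> RR P X m" if mt: "m < t" for m
    proof -
      obtain w where "w > 0" "eval fR [m, P, X] w" using M2 mt by auto
      then have "(1::nat) - (if RR P X m then 1 else 0) > 0" using eval_det[OF fR'] by metis
      then show ?thesis by (cases "RR P X m") auto
    qed
    then have "t = (LEAST t. RR P X t)" using R by (intro Least_equality[symmetric]) (auto simp: not_less[symmetric])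
    moreover have "y = tv t" using eval_det[OF fO' B[unfolded vs]] .
    ultimately show "(\<exists>t. RR P X t) \<and> y = tv (LEAST t. RR P X t)" using R by blast
  next
    assume "(\<exists>t. RR P X t) \<and> y = tv (LEAST t. RR P X t)"
    then obtain t where R: "RR P X t" and y: "y = tv (LEAST t. RR P X t)" by blast
    let ?t = "LEAST t. RR P X t"
    have R0: "RR P X ?t" using R by (rule LeastI)
    have "eval (Mu fR) [P, X] ?t"
    proof (rule eval.mu)
      show "eval fR (?t # [P, X]) 0" using fR'[of ?t P X] R0 by simp
      show "\<forall>m<?t. \<exists>w>0. eval fR (m # [P, X]) w"
      proof (intro allI impI)
        fix m assume "m < ?t"
        then have "\<not> RR P X m" by (rule not_less_Least)
        then show "\<exists>w>0. eval fR (m # [P, X]) w" using fR'[of m P X] by auto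
      qed
    qed
    then show "eval F [P, X] y" unfolding F_def y
      by (intro eval.comp[where vs="[?t]"]) (simp_all add: fO')
  qed
  show ?thesis unfolding computable2_def
  proof (intro exI[of _ F] allI)
    fix p x y
    show "UU p x = Some y \<longleftrightarrow> eval F [enc p, enc x] (enc y)"
      unfolding key UU_def by (auto simp: enc_inj)
  qed
qed

lemma UU_run:
  assumes ev: "eval f [enc q, enc x] (enc y)"
  shows "UU ((x \<noteq> [True]) # replicate (code f) True @ False # q) x = Some y"
proof -
  let ?b = "x \<noteq> [True]"
  let ?p = "?b # replicate (code f) True @ False # q"
  obtain Ns where N: "validL Ns" "hasL Ns (code f) (lenc [enc q, enc x]) (enc y)"
    using complete[OF ev] by blast
  define t where "t = pr (code f) (pr (enc q) (pr (lenc Ns) (pr (if ?b then 1 else 0) (enc y))))"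
  have enc_True: "enc [True] = 2" by simp
  have t1: "tk t = code f" "tq t = enc q" "tL t = lenc Ns" "tb t = (if ?b then 1 else 0)" "tv t = enc y"
    by (simp_all add: t_def tk_def tq_def tL_def tb_def tv_def)
  have c1: "validC (lenc Ns)" using N(1) by (simp add: validC_iff)
  have c2: "hasC (lenc Ns) (llen (lenc Ns)) (code f) (lcons (enc q) (lcons (enc x) 0)) (enc y)"
    using N(2) hasC_iff[of "lenc Ns"] by simp
  have c3: "enc ?p = Pval (if ?b then 1 else 0) (code f) (enc q)" by (simp add: Pval_enc)
  have c4: "?b \<longrightarrow> enc x \<noteq> 2"
  proof
    assume b: ?b
    show "enc x \<noteq> 2"
    proof
      assume "enc x = 2"
      then have "enc x = enc [True]" by simp
      then have "x = [True]" by (rule enc_inj)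
      with b show False by simp
    qed
  qed
  have c5: "\<not> ?b \<longrightarrow> enc x \<noteq> 0" by auto
  have "RR (enc ?p) (enc x) t"
    unfolding RR_def t1 using c1 c2 c3 c4 c5 by auto
  then have ex: "\<exists>t. RR (enc ?p) (enc x) t" by blast
  let ?t = "LEAST t. RR (enc ?p) (enc x) t"
  have R: "RR (enc ?p) (enc x) ?t" using ex by (rule LeastI_ex)
  then have "enc ?p = enc ((tb ?t \<noteq> 0) # replicate (tk ?t) True @ False # dec (tq ?t))"
    unfolding RR_def by (simp add: Pval_enc)
  then have "?p = (tb ?t \<noteq> 0) # replicate (tk ?t) True @ False # dec (tq ?t)" by (rule enc_inj)
  then have "replicate (code f) True @ False # q = replicate (tk ?t) True @ False # dec (tq ?t)" by simp
  from rep_inj[OF this] have k1: "tk ?t = code f" and qq: "q = dec (tq ?t)" by auto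
  have "tq ?t = enc q" using arg_cong[OF qq, of enc] by simp
  note kq = k1 this
  have H: "hasL (ldec (tL ?t)) (code f) (lenc [enc q, enc x]) (tv ?t)"
    using R kq unfolding RR_def by (simp add: hasC_iff)
  have V: "validL (ldec (tL ?t))" using R unfolding RR_def by (simp add: validC_iff)
  have "eval f (ldec (lenc [enc q, enc x])) (tv ?t)" by (rule sound[OF V H])
  then have "eval f [enc q, enc x] (tv ?t)" by simp
  then have "tv ?t = enc y" using eval_det[OF ev] by simp
  then show ?thesis unfolding UU_def using ex by simp
qed

lemma UU_E: "E UU [] [True] = \<infinity>"
proof -
  have emp: "{p. UU p [] = Some [True] \<and> UU p [True] = Some []} = {}"
  proof (rule ccontr)
    assume "{p. UU p [] = Some [True] \<and> UU p [True] = Some []} \<noteq> {}"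
    then obtain p where "UU p [] \<noteq> None" "UU p [True] \<noteq> None" by auto
    then obtain t t' where R1: "RR (enc p) (enc []) t" and R2: "RR (enc p) (enc [True]) t'"
      unfolding UU_def by (auto split: if_splits)
    from R1 have "tb t \<noteq> 0" "enc p = Pval (tb t) (tk t) (tq t)" unfolding RR_def by auto
    then have "even (enc p)" by (simp add: Pval_def)
    moreover from R2 have "tb t' = 0" "enc p = Pval (tb t') (tk t') (tq t')" unfolding RR_def by auto
    then have "odd (enc p)" by (simp add: Pval_def)
    ultimately show False by simp
  qed
  show ?thesis unfolding E_def by (subst emp) (simp add: top_enat_def)
qed

lemma UU_KS:
  assumes "computable2 V"
  shows "\<exists>c::nat. \<forall>x y. KS UU y x \<le> KS V y x + enat c"
proof -
  obtain fV where fV: "\<And>p x y. V p x = Some y \<longleftrightarrow> eval fV [enc p, enc x] (enc y)"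
    using assms unfolding computable2_def by blast
  let ?c = "code fV + 2"
  have "KS UU y x \<le> KS V y x + enat ?c" for x y
  proof (cases "{p. V p x = Some y} = {}")
    case True
    then show ?thesis by (simp add: KS_def top_enat_def)
  next
    case False
    then obtain p0 where "V p0 x = Some y" by auto
    then obtain p where p: "V p x = Some y" and pmin: "\<And>p'. V p' x = Some y \<Longrightarrow> length p \<le> length p'"
      using ex_has_least_nat[of "\<lambda>p. V p x = Some y" p0 length] by blast
    have KV: "KS V y x = enat (length p)"
      unfolding KS_def
    proof (rule antisym)
      show "(INF p\<in>{p. V p x = Some y}. enat (length p)) \<le> enat (length p)"
        using p by (intro INF_lower) simp
      show "enat (length p) \<le> (INF p\<in>{p. V p x = Some y}. enat (length p))"
        using pmin by (intro INF_greatest) simp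
    qed
    have "UU ((x \<noteq> [True]) # replicate (code fV) True @ False # p) x = Some y"
      using p fV by (intro UU_run) simp
    then have "KS UU y x \<le> enat (length ((x \<noteq> [True]) # replicate (code fV) True @ False # p))"
      unfolding KS_def by (intro INF_lower) simp
    also have "\<dots> = KS V y x + enat ?c" using KV by simp
    finally show ?thesis .
  qed
  then show ?thesis by blast
qed

theorem proposition1:
  shows "\<exists>U. computable2 U
           \<and> (\<forall>V. computable2 V \<longrightarrow> (\<exists>c::nat. \<forall>x y. KS U y x \<le> KS V y x + enat c))
           \<and> (\<exists>x y. E U x y = \<infinity>)"
  using computable_UU UU_KS UU_E by blast

end
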